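(* For every integer $k\ge1$ large enough, with $h=1/k$, the zero solution of the difference equation with variable delay $$\zeta_h(n+1)=\zeta_h(n)-\Big\{h-\frac{\cos((n+1)h)-\cos(nh)}{3}\Big\}\,\zeta_h\Big(n-\Big\lfloor\frac{|\cos(nh)|}{h}\Big\rfloor\Big),\qquad n\ge0,$$ (with initial values $\zeta_h(n)$ prescribed for $n=-k,\dots,0$) is uniformly asymptotically stable. Moreover, its solutions with $\zeta_h(n)=\varphi(nh)$, $n=-k,\dots,0$, approximate the solution of $x'(t)=-\big[1+\tfrac{\sin t}{3}\big]x(t-|\cos t|)$, $x=\varphi$ on $[-1,0]$, in the sense that $|x(t)-\zeta_h(\lfloor t/h\rfloor)|\to0$ as $h\to0$ for each $t>0$.
   Context: Here $\varphi\in C([-1,0],\mathbb R)$. The coefficient satisfies $\int_{nh}^{(n+1)h}\big(1+\tfrac{\sin s}{3}\big)ds=h-\frac{\cos((n+1)h)-\cos(nh)}{3}$, so the equation is the piecewise-constant-argument discretization of $x'(t)=-a(t)x(t-r(t))$ with $a(t)=1+\frac{\sin t}{3}$, $r(t)=|\cos t|$, $q=1$. Uniform asymptotic stability of the zero solution of a delay difference equation means uniform stability together with uniform attractivity with respect to the initial time. *)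

theory Defs
  imports "HOL-Analysis.Analysis"
begin

definition dcoef :: "real \<Rightarrow> int \<Rightarrow> real" where
  "dcoef h n = h - (cos ((real_of_int n + 1) * h) - cos (real_of_int n * h)) / 3"

definition ddelay :: "real \<Rightarrow> int \<Rightarrow> int" where
  "ddelay h n = \<lfloor>\<bar>cos (real_of_int n * h)\<bar> / h\<rfloor>"

definition dsol :: "nat \<Rightarrow> int \<Rightarrow> (int \<Rightarrow> real) \<Rightarrow> bool" where
  "dsol k n0 z \<longleftrightarrow>
     (\<forall>n\<ge>n0. z (n + 1) = z n - dcoef (1 / real k) n * z (n - ddelay (1 / real k) n))"

definition unif_stable :: "nat \<Rightarrow> bool" where
  "unif_stable k \<longleftrightarrow>
     (\<forall>\<epsilon>>0. \<exists>\<delta>>0. \<forall>n0\<ge>0. \<forall>z. dsol k n0 z \<and> (\<forall>j\<in>{n0 - int k..n0}. \<bar>z j\<bar> < \<delta>)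
        \<longrightarrow> (\<forall>n\<ge>n0. \<bar>z n\<bar> < \<epsilon>))"

definition unif_attractive :: "nat \<Rightarrow> bool" where
  "unif_attractive k \<longleftrightarrow>
     (\<exists>\<eta>>0. \<forall>\<epsilon>>0. \<exists>N::nat. \<forall>n0\<ge>0. \<forall>z. dsol k n0 z \<and> (\<forall>j\<in>{n0 - int k..n0}. \<bar>z j\<bar> < \<eta>)
        \<longrightarrow> (\<forall>n\<ge>n0 + int N. \<bar>z n\<bar> < \<epsilon>))"

definition unif_asymp_stable :: "nat \<Rightarrow> bool" where
  "unif_asymp_stable k \<longleftrightarrow> unif_stable k \<and> unif_attractive k"

definition dde_sol :: "(real \<Rightarrow> real) \<Rightarrow> (real \<Rightarrow> real) \<Rightarrow> bool" where
  "dde_sol \<phi> x \<longleftrightarrow> continuous_on {-1..} x \<and> (\<forall>t\<in>{-1..0}. x t = \<phi> t) \<and>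
     (\<forall>t\<ge>0. (x has_real_derivative (- (1 + sin t / 3) * x (t - \<bar>cos t\<bar>))) (at t within {0..}))"

end

theory Submission
  imports Defs
begin

lemma cos_lip: "\<bar>cos (x::real) - cos y\<bar> \<le> \<bar>x - y\<bar>"
proof -
  have "norm (cos x - cos y) \<le> 1 * norm (x - y)"
    using field_differentiable_bound[of UNIV cos "\<lambda>z. - sin z" 1 x y]
    by (auto intro!: derivative_eq_intros)
  then show ?thesis by simp
qed

lemma G_mono:
  fixes G :: "int \<Rightarrow> real"
  assumes "\<And>i. G i \<le> G (i+1)" "i \<le> j"
  shows "G i \<le> G j"
proof -
  have "\<And>p. G i \<le> G (i + int p)"
  proof -
    fix p show "G i \<le> G (i + int p)"
    proof (induction p)
      case 0 then show ?case by simp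
    next
      case (Suc p)
      have "G (i + int p) \<le> G (i + int p + 1)" by (rule assms(1))
      then show ?case using Suc by (simp add: ac_simps)
    qed
  qed
  from this[of "nat (j - i)"] assms(2) show ?thesis by simp
qed

definition Phi :: "real \<Rightarrow> real \<Rightarrow> real" where "Phi L v = (max 0 (L - v))^2 / 2"

lemma Phi_anti: "v \<le> w \<Longrightarrow> Phi L w \<le> Phi L v"
  unfolding Phi_def by (auto intro!: power_mono simp: max_def)

lemma Phi_nonneg: "0 \<le> Phi L v"
  unfolding Phi_def by simp

lemma Phi_step:
  assumes "0 \<le> W" "0 \<le> aa"
  shows "aa * W \<le> Phi L (L - W - aa) - Phi L (L - W)"
  using assms unfolding Phi_def by (simp add: max_def power2_eq_square algebra_simps)

lemma key_pos:
  fixes k :: nat and a :: "int \<Rightarrow> real" and d :: "int \<Rightarrow> int" and G :: "int \<Rightarrow> real"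
    and z :: "int \<Rightarrow> real"
  assumes aG: "\<And>i. a i = G (i+1) - G i"
    and alo: "\<And>i. alo \<le> a i" and ahi: "\<And>i. a i \<le> ahi" and alo0: "0 \<le> alo" and alo1: "alo \<le> 1"
    and d0: "\<And>i. 0 \<le> d i" and dk: "\<And>i. d i \<le> int k"
    and win: "\<And>i. G (i+1) - G (i - d i) \<le> L" and L0: "0 \<le> L"
    and rec: "\<And>i. i \<ge> t - 4*int k - 1 \<Longrightarrow> z (i+1) = z i - a i * z (i - d i)"
    and bnd: "\<And>i. t - 5*int k - 1 \<le> i \<Longrightarrow> i \<le> t - 1 \<Longrightarrow> \<bar>z i\<bar> \<le> M"
    and pos: "z t > 0" and k1: "k \<ge> 1"
  shows "z t \<le> max (ahi + L^2/2) ((1 - alo)^k) * M"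
proof -
  have M0: "0 \<le> M" using bnd[of "t-1"] k1 by force
  have Gm: "\<And>i j. i \<le> j \<Longrightarrow> G i \<le> G j"
  proof -
    fix i j :: int assume "i \<le> j"
    show "G i \<le> G j"
    proof (rule G_mono[OF _ \<open>i \<le> j\<close>])
      fix i show "G i \<le> G (i+1)" using aG[of i] alo[of i] alo0 by simp
    qed
  qed
  show ?thesis
  proof (cases "\<forall>j\<in>{t - 3*int k..t}. z j > 0")
    case True
    have dec1: "z (j+1) \<le> z j" if "t - 2*int k \<le> j" "j \<le> t - 1" for j
    proof -
      have "z (j - d j) > 0" using True that d0[of j] dk[of j] by auto
      moreover have "0 \<le> a j" using alo[of j] alo0 by simp
      ultimately show ?thesis using rec[of j] that k1
        by (smt (verit) mult_nonneg_nonneg)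
    qed
    have mono: "z (i + int p) \<le> z i" if "t - 2*int k \<le> i" "i + int p \<le> t" for i p
      using that
    proof (induction p)
      case 0 then show ?case by simp
    next
      case (Suc p)
      then have "z (i + int p + 1) \<le> z (i + int p)" by (intro dec1) auto
      then show ?case using Suc by (simp add: ac_simps)
    qed
    have decay: "z (t - int k + int p) \<le> (1 - alo)^p * z (t - int k)" if "p \<le> k" for p
      using that
    proof (induction p)
      case 0 then show ?case by simp
    next
      case (Suc p)
      define j where "j = t - int k + int p"
      have jr: "t - int k \<le> j" "j \<le> t - 1" using Suc.prems unfolding j_def by auto
      have zj: "z j > 0" using True jr k1 by auto
      have "z (j - d j + int (nat (d j))) \<le> z (j - d j)"
        by (rule mono) (use jr d0[of j] dk[of j] in auto)
      then have zd: "z j \<le> z (j - d j)" using d0[of j] by simp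
      have aj: "alo \<le> a j" "0 \<le> a j" using alo[of j] alo0 by auto
      have "z (j+1) = z j - a j * z (j - d j)" using rec[of j] jr by simp
      also have "\<dots> \<le> z j - a j * z j" using mult_left_mono[OF zd aj(2)] by linarith
      also have "\<dots> \<le> (1 - alo) * z j" using mult_right_mono[OF aj(1), of "z j"] zj by (simp add: algebra_simps)
      also have "\<dots> \<le> (1 - alo) * ((1 - alo)^p * z (t - int k))"
        apply (rule mult_left_mono) using Suc alo1 unfolding j_def by auto
      finally have "z (j+1) \<le> (1 - alo)^Suc p * z (t - int k)" by simp
      moreover have "j + 1 = t - int k + int (Suc p)" unfolding j_def by simp
      ultimately show ?case by simp
    qed
    have "z t \<le> (1 - alo)^k * z (t - int k)" using decay[of k] by simp
    also have "\<dots> \<le> (1 - alo)^k * M"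
      using bnd[of "t - int k"] k1 alo1 by (intro mult_left_mono) auto
    also have "\<dots> \<le> max (ahi + L^2/2) ((1 - alo)^k) * M"
      using M0 by (intro mult_right_mono) auto
    finally show ?thesis .
  next
    case False
    define S where "S = {j\<in>{t - 3*int k..t}. z j \<le> 0}"
    have Sne: "S \<noteq> {}" using False by (auto simp: S_def)
    have Sfin: "finite S" by (rule finite_subset[of _ "{t - 3*int k..t}"]) (auto simp: S_def)
    define m1 where "m1 = Max S"
    have m1S: "m1 \<in> S" using Sne Sfin by (simp add: m1_def)
    have m1r: "t - 3*int k \<le> m1" "m1 \<le> t - 1" "z m1 \<le> 0"
      using m1S pos by (auto simp: S_def) (smt (verit))
    have posr: "z j > 0" if "m1 < j" "j \<le> t" for j
    proof (rule ccontr)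
      assume "\<not> z j > 0"
      then have "j \<in> S" using that m1r by (auto simp: S_def)
      then have "j \<le> m1" using Sfin by (simp add: m1_def)
      then show False using that by simp
    qed
    define m where "m = m1 + 1"
    have step1: "- z (m1 - int p) \<le> M * (G m - G (m1 - int p))" if "p \<le> k" for p
      using that
    proof (induction p)
      case 0
      define q where "q = m1 - d m1"
      have e: "z m = z m1 - a m1 * z q" using rec[of m1] m1r unfolding m_def q_def by simp
      have zm: "z m > 0" using posr m1r unfolding m_def by simp
      have "\<bar>z q\<bar> \<le> M" using bnd[of q] m1r d0[of m1] dk[of m1] unfolding q_def by simp
      then have "- z q \<le> M" by linarith
      moreover have "0 \<le> a m1" using alo[of m1] alo0 by simp
      ultimately have "a m1 * (- z q) \<le> a m1 * M" by (rule mult_left_mono)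
      then have "- z m1 \<le> a m1 * M" using e zm by simp
      then show ?case using aG[of m1] unfolding m_def by (simp add: algebra_simps)
    next
      case (Suc p)
      define u where "u = m1 - int p - 1"
      define q where "q = u - d u"
      have ur: "m1 - int k \<le> u" "u \<le> m1" using Suc.prems unfolding u_def by auto
      have e: "z (u+1) = z u - a u * z q" using rec[of u] ur m1r unfolding q_def by simp
      have "\<bar>z q\<bar> \<le> M" using bnd[of q] ur m1r d0[of u] dk[of u] unfolding q_def by simp
      then have "- z q \<le> M" by linarith
      moreover have "0 \<le> a u" using alo[of u] alo0 by simp
      ultimately have "a u * (- z q) \<le> a u * M" by (rule mult_left_mono)
      moreover have "- z (u+1) \<le> M * (G m - G (u+1))" using Suc unfolding u_def by simp
      ultimately have "- z u \<le> M * (G m - G (u+1)) + a u * M" using e by simp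
      then have "- z u \<le> M * (G m - G u)" using aG[of u] by (simp add: algebra_simps)
      then show ?case unfolding u_def by (simp add: algebra_simps)
    qed
    have step3: "z (m + int p) \<le> M * (a m1 + L^2/2 - Phi L (G (m + int p) - G m))"
      if "m + int p \<le> t" for p
      using that
    proof (induction p)
      case 0
      define q where "q = m1 - d m1"
      have e: "z m = z m1 - a m1 * z q" using rec[of m1] m1r unfolding m_def q_def by simp
      have "\<bar>z q\<bar> \<le> M" using bnd[of q] m1r d0[of m1] dk[of m1] unfolding q_def by simp
      then have "- z q \<le> M" by linarith
      moreover have "0 \<le> a m1" using alo[of m1] alo0 by simp
      ultimately have "a m1 * (- z q) \<le> a m1 * M" by (rule mult_left_mono)
      then have "z m \<le> a m1 * M" using e m1r by simp
      moreover have "a m1 + L^2/2 - Phi L 0 = a m1" using L0 by (simp add: Phi_def)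
      ultimately have "z m \<le> M * (a m1 + L^2/2 - Phi L 0)" by (simp add: mult.commute)
      then show ?case by simp
    next
      case (Suc p)
      define j where "j = m + int p"
      define q where "q = j - d j"
      have jr: "m \<le> j" "j \<le> t - 1" using Suc.prems unfolding j_def by auto
      have IH: "z j \<le> M * (a m1 + L^2/2 - Phi L (G j - G m))" using Suc unfolding j_def by simp
      have rj: "z (j+1) = z j - a j * z q" using rec[of j] jr m1r unfolding m_def q_def by simp
      have aj0: "0 \<le> a j" using alo[of j] alo0 by simp
      have goal: "z (j+1) \<le> M * (a m1 + L^2/2 - Phi L (G (j+1) - G m))"
      proof (cases "q \<ge> m")
        case True
        then have "z q > 0" using posr[of q] d0[of j] jr unfolding m_def q_def by simp
        then have "0 \<le> a j * z q" using aj0 by simp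
        then have "z (j+1) \<le> z j" using rj by simp
        moreover have "Phi L (G (j+1) - G m) \<le> Phi L (G j - G m)"
          using Phi_anti aG[of j] aj0 by simp
        ultimately show ?thesis using IH M0 mult_left_mono[of "Phi L (G (j+1) - G m)" "Phi L (G j - G m)" M]
          by (simp add: algebra_simps)
      next
        case False
        define W where "W = L - (G (j+1) - G m)"
        have p1: "- z q \<le> M * (G m - G q)"
          using step1[of "nat (m1 - q)"] False dk[of j] jr unfolding m_def q_def by simp
        have W1: "G m - G q \<le> W" using win[of j] unfolding W_def q_def by simp
        have W0: "0 \<le> W" using W1 Gm[of q m] False by simp
        have "M * (G m - G q) \<le> M * W" using W1 M0 by (rule mult_left_mono)
        with p1 have "- z q \<le> M * W" by simp
        then have "a j * (- z q) \<le> a j * (M * W)" using aj0 by (rule mult_left_mono)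
        then have A1: "a j * (- z q) \<le> M * (a j * W)" by (simp add: ac_simps)
        have e1: "L - W - a j = G j - G m" and e2: "L - W = G (j+1) - G m"
          using aG[of j] unfolding W_def by auto
        have "a j * W \<le> Phi L (L - W - a j) - Phi L (L - W)"
          by (rule Phi_step) (use W0 aj0 in auto)
        moreover have "Phi L (L - W - a j) = Phi L (G j - G m)" using e1 by simp
        moreover have "Phi L (L - W) = Phi L (G (j+1) - G m)" using e2 by simp
        ultimately have A2: "a j * W \<le> Phi L (G j - G m) - Phi L (G (j+1) - G m)" by linarith
        note A1 A2
        then have "a j * (- z q) \<le> M * (Phi L (G j - G m) - Phi L (G (j+1) - G m))"
          using A1 mult_left_mono[OF A2 M0] by linarith
        then show ?thesis using IH rj by (simp add: algebra_simps)
      qed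
      have E: "m + int (Suc p) = j + 1" unfolding j_def by simp
      show ?case unfolding E by (rule goal)
    qed
    have "z t \<le> M * (a m1 + L^2/2 - Phi L (G t - G m))"
      using step3[of "nat (t - m)"] m1r by (simp add: m_def)
    also have "\<dots> \<le> M * (ahi + L^2/2)"
      using M0 ahi[of m1] Phi_nonneg[of L "G t - G m"] by (intro mult_left_mono) auto
    also have "\<dots> \<le> M * max (ahi + L^2/2) ((1 - alo)^k)"
      using M0 by (intro mult_left_mono) auto
    also have "\<dots> = max (ahi + L^2/2) ((1 - alo)^k) * M" by simp
    finally show ?thesis .
  qed
qed

lemma key_abs:
  fixes k :: nat and a :: "int \<Rightarrow> real" and d :: "int \<Rightarrow> int" and G :: "int \<Rightarrow> real"
    and z :: "int \<Rightarrow> real"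
  assumes aG: "\<And>i. a i = G (i+1) - G i"
    and alo: "\<And>i. alo \<le> a i" and ahi: "\<And>i. a i \<le> ahi" and alo0: "0 \<le> alo" and alo1: "alo \<le> 1"
    and d0: "\<And>i. 0 \<le> d i" and dk: "\<And>i. d i \<le> int k"
    and win: "\<And>i. G (i+1) - G (i - d i) \<le> L" and L0: "0 \<le> L"
    and rec: "\<And>i. i \<ge> t - 4*int k - 1 \<Longrightarrow> z (i+1) = z i - a i * z (i - d i)"
    and bnd: "\<And>i. t - 5*int k - 1 \<le> i \<Longrightarrow> i \<le> t - 1 \<Longrightarrow> \<bar>z i\<bar> \<le> M"
    and k1: "k \<ge> 1" and rho: "max (ahi + L^2/2) ((1 - alo)^k) \<le> \<rho>"
  shows "\<bar>z t\<bar> \<le> \<rho> * M"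
proof -
  have M0: "0 \<le> M" using bnd[of "t-1"] k1 by force
  have "0 \<le> ahi + L^2/2" using alo[of 0] ahi[of 0] alo0 by simp
  then have r0: "0 \<le> max (ahi + L^2/2) ((1 - alo)^k)" by (rule order_trans) simp
  have "\<bar>z t\<bar> \<le> max (ahi + L^2/2) ((1 - alo)^k) * M"
  proof (cases "z t > 0")
    case True
    then show ?thesis using key_pos[OF aG alo ahi alo0 alo1 d0 dk win L0 rec bnd True k1] by simp
  next
    case False
    show ?thesis
    proof (cases "z t = 0")
      case True then show ?thesis using r0 M0 by simp
    next
      case False
      then have "(\<lambda>i. - z i) t > 0" using \<open>\<not> z t > 0\<close> by simp
      have "(\<lambda>i. - z i) t \<le> max (ahi + L^2/2) ((1 - alo)^k) * M"
        apply (rule key_pos[where z="\<lambda>i. - z i" and t=t and M=M, OF aG alo ahi alo0 alo1 d0 dk win L0])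
        using rec bnd k1 \<open>(\<lambda>i. - z i) t > 0\<close> by auto
      then show ?thesis using \<open>\<not> z t > 0\<close> by simp
    qed
  qed
  also have "\<dots> \<le> \<rho> * M" using rho M0 by (rule mult_right_mono)
  finally show ?thesis .
qed

lemma decay_all:
  fixes k :: nat and a :: "int \<Rightarrow> real" and d :: "int \<Rightarrow> int" and G :: "int \<Rightarrow> real"
    and z :: "int \<Rightarrow> real"
  assumes aG: "\<And>i. a i = G (i+1) - G i"
    and alo: "\<And>i. alo \<le> a i" and ahi: "\<And>i. a i \<le> ahi" and alo0: "0 \<le> alo" and alo1: "alo \<le> 1"
    and d0: "\<And>i. 0 \<le> d i" and dk: "\<And>i. d i \<le> int k"
    and win: "\<And>i. G (i+1) - G (i - d i) \<le> L" and L0: "0 \<le> L"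
    and k1: "k \<ge> 1" and rho: "max (ahi + L^2/2) ((1 - alo)^k) \<le> \<rho>" and rho1: "\<rho> \<le> 1"
    and rec: "\<And>i. i \<ge> n0 \<Longrightarrow> z (i+1) = z i - a i * z (i - d i)"
    and init: "\<And>i. n0 - int k \<le> i \<Longrightarrow> i \<le> n0 \<Longrightarrow> \<bar>z i\<bar> \<le> \<delta>"
  shows "\<And>i. n0 - int k + int p * (5 * int k + 1) \<le> i \<Longrightarrow>
           \<bar>z i\<bar> \<le> \<rho>^p * ((1 + ahi)^(5*k+1) * \<delta>)"
proof -
  have ahi0: "0 \<le> ahi" using alo[of 0] ahi[of 0] alo0 by simp
  have d00: "0 \<le> \<delta>" using init[of n0] by force
  have crude: "\<bar>z i\<bar> \<le> (1 + ahi)^q * \<delta>" if "n0 - int k \<le> i" "i \<le> n0 + int q" for q i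
    using that
  proof (induction q arbitrary: i)
    case 0 then show ?case using init by simp
  next
    case (Suc q)
    show ?case
    proof (cases "i \<le> n0 + int q")
      case True
      then have "\<bar>z i\<bar> \<le> (1 + ahi)^q * \<delta>" using Suc by simp
      also have "\<dots> \<le> (1 + ahi)^Suc q * \<delta>"
        using ahi0 d00 by (intro mult_right_mono power_increasing) auto
      finally show ?thesis .
    next
      case False
      then have ii: "i = (n0 + int q) + 1" using Suc.prems by simp
      define j where "j = n0 + int q"
      have z1: "\<bar>z j\<bar> \<le> (1 + ahi)^q * \<delta>" using Suc.IH[of j] k1 unfolding j_def by simp
      have z2: "\<bar>z (j - d j)\<bar> \<le> (1 + ahi)^q * \<delta>"
        using Suc.IH[of "j - d j"] d0[of j] dk[of j] unfolding j_def by simp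
      have "z (j+1) = z j - a j * z (j - d j)" using rec[of j] unfolding j_def by simp
      moreover have "\<bar>z j - a j * z (j - d j)\<bar> \<le> \<bar>z j\<bar> + \<bar>a j * z (j - d j)\<bar>"
        by (rule abs_triangle_ineq4)
      moreover have "\<bar>a j * z (j - d j)\<bar> = a j * \<bar>z (j - d j)\<bar>"
        using alo[of j] alo0 by (simp add: abs_mult)
      ultimately have "\<bar>z (j+1)\<bar> \<le> \<bar>z j\<bar> + a j * \<bar>z (j - d j)\<bar>" by simp
      also have "\<dots> \<le> (1 + ahi)^q * \<delta> + ahi * ((1 + ahi)^q * \<delta>)"
        using z1 z2 ahi[of j] alo[of j] alo0
        by (intro add_mono mult_mono) auto
      also have "\<dots> = (1 + ahi)^Suc q * \<delta>" by (simp add: algebra_simps)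
      finally show ?thesis unfolding ii j_def .
    qed
  qed
  define C where "C = (1 + ahi)^(5*k+1) * \<delta>"
  have C0: "0 \<le> C" using ahi0 d00 unfolding C_def by simp
  show "\<And>i. n0 - int k + int p * (5 * int k + 1) \<le> i \<Longrightarrow> \<bar>z i\<bar> \<le> \<rho>^p * C"
  proof (induction p)
    case 0
    fix i assume i0: "n0 - int k + int 0 * (5 * int k + 1) \<le> i"
    have "\<And>q. \<forall>i. n0 - int k \<le> i \<longrightarrow> i \<le> n0 + int q \<longrightarrow> \<bar>z i\<bar> \<le> C"
    proof -
      fix q show "\<forall>i. n0 - int k \<le> i \<longrightarrow> i \<le> n0 + int q \<longrightarrow> \<bar>z i\<bar> \<le> C"
      proof (induction q)
        case 0
        have "\<delta> \<le> C" unfolding C_def using ahi0 d00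
          by (metis mult_1 mult_right_mono one_le_power le_add_same_cancel1)
        then show ?case using crude[of _ 0] by fastforce
      next
        case (Suc q)
        show ?case
        proof (intro allI impI)
          fix i assume h: "n0 - int k \<le> i" "i \<le> n0 + int (Suc q)"
          show "\<bar>z i\<bar> \<le> C"
          proof (cases "i \<le> n0 + int q")
            case True then show ?thesis using Suc h by blast
          next
            case False
            then have ii: "i = n0 + int q + 1" using h by simp
            show ?thesis
            proof (cases "q + 1 \<le> 5*k+1")
              case True
              have "\<bar>z i\<bar> \<le> (1 + ahi)^(q+1) * \<delta>" using crude[of i "q+1"] h by simp
              also have "\<dots> \<le> C" unfolding C_def
                using True ahi0 d00 by (intro mult_right_mono power_increasing) auto
              finally show ?thesis .
            next
              case False
              have "\<bar>z i\<bar> \<le> \<rho> * C"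
                by (rule key_abs[OF aG alo ahi alo0 alo1 d0 dk win L0 _ _ k1 rho])
                   (use rec Suc ii False in auto)
              also have "\<dots> \<le> C" using mult_right_mono[OF rho1 C0] by simp
              finally show ?thesis .
            qed
          qed
        qed
      qed
    qed
    from this[of "nat (i - n0)"] i0 have "\<bar>z i\<bar> \<le> C" by auto
    then show "\<bar>z i\<bar> \<le> \<rho>^0 * C" by simp
  next
    case (Suc p)
    fix i assume i0: "n0 - int k + int (Suc p) * (5 * int k + 1) \<le> i"
    have pk: "0 \<le> int p * (5 * int k + 1)" by simp
    have pe: "int (Suc p) * (5*int k+1) = int p * (5*int k+1) + (5*int k + 1)" by (simp add: algebra_simps)
    have low: "n0 - int k + int p * (5 * int k + 1) + 5 * int k + 1 \<le> i" using i0 pe by linarith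
    have "\<bar>z i\<bar> \<le> \<rho> * (\<rho>^p * C)"
      apply (rule key_abs[OF aG alo ahi alo0 alo1 d0 dk win L0 _ _ k1 rho])
      subgoal for j by (rule rec) (use low pk in linarith)
      subgoal for j by (rule Suc.IH) (use low in linarith)
      done
    then show "\<bar>z i\<bar> \<le> \<rho>^Suc p * C" by simp
  qed
qed

definition Gk :: "nat \<Rightarrow> int \<Rightarrow> real" where
  "Gk k i = real_of_int i * (1 / real k) - cos (real_of_int i * (1 / real k)) / 3"

lemma dcoef_G: "dcoef h i = (real_of_int (i+1) * h - cos (real_of_int (i+1) * h)/3)
   - (real_of_int i * h - cos (real_of_int i * h)/3)"
  unfolding dcoef_def by (simp add: algebra_simps diff_divide_distrib)

lemma conc_aG: "dcoef (1 / real k) i = Gk k (i+1) - Gk k i"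
  unfolding Gk_def by (rule dcoef_G)

lemma conc_a:
  assumes "k \<ge> 1"
  shows "2 / (3 * real k) \<le> dcoef (1 / real k) i" "dcoef (1 / real k) i \<le> 4 / (3 * real k)"
proof -
  have "\<And>h::real. h > 0 \<Longrightarrow> \<bar>cos ((real_of_int i + 1) * h) - cos (real_of_int i * h)\<bar> \<le> h"
  proof -
    fix h :: real assume "h > 0"
    have "(real_of_int i + 1) * h - real_of_int i * h = h" by (simp add: algebra_simps)
    then show "\<bar>cos ((real_of_int i + 1) * h) - cos (real_of_int i * h)\<bar> \<le> h"
      using cos_lip[of "(real_of_int i + 1) * h" "real_of_int i * h"] \<open>h > 0\<close> by simp
  qed
  from this[of "1 / real k"]
  have "\<bar>cos ((real_of_int i + 1) * (1 / real k)) - cos (real_of_int i * (1 / real k))\<bar> \<le> 1 / real k"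
    using assms by simp
  then show "2 / (3 * real k) \<le> dcoef (1 / real k) i" "dcoef (1 / real k) i \<le> 4 / (3 * real k)"
    unfolding dcoef_def by (auto simp: field_simps abs_le_iff)
qed

lemma conc_d:
  assumes "k \<ge> 1"
  shows "0 \<le> ddelay (1 / real k) i" "ddelay (1 / real k) i \<le> int k"
proof -
  have e: "\<bar>cos (real_of_int i * (1 / real k))\<bar> / (1 / real k) = \<bar>cos (real_of_int i * (1 / real k))\<bar> * real k"
    by simp
  have c1: "\<bar>cos (real_of_int i * (1 / real k))\<bar> \<le> 1" by simp
  have "0 \<le> \<bar>cos (real_of_int i * (1 / real k))\<bar> * real k" by simp
  then show "0 \<le> ddelay (1 / real k) i" unfolding ddelay_def e by simp
  have "\<bar>cos (real_of_int i * (1 / real k))\<bar> * real k \<le> real k"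
    using mult_right_mono[OF c1, of "real k"] by simp
  then have "\<lfloor>\<bar>cos (real_of_int i * (1 / real k))\<bar> * real k\<rfloor> \<le> \<lfloor>real k\<rfloor>" by (rule floor_mono)
  then show "ddelay (1 / real k) i \<le> int k" unfolding ddelay_def e by simp
qed

lemma aux43:
  fixes A B X :: real assumes "\<bar>A - B\<bar> \<le> X" shows "X - (A - B)/3 \<le> X * (4/3)"
proof -
  have "B - A \<le> X" using assms by (simp add: abs_le_iff)
  then show ?thesis by (simp add: field_simps)
qed

lemma conc_win:
  assumes "k \<ge> 80"
  shows "Gk k (i+1) - Gk k (i - ddelay (1 / real k) i) \<le> 27/20"
proof -
  define h where "h = 1 / real k"
  define dd where "dd = ddelay (1 / real k) i"
  have k1: "k \<ge> 1" using assms by simp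
  have d0: "0 \<le> dd" "dd \<le> int k" using conc_d[OF k1] unfolding dd_def by auto
  have h0: "0 < h" using k1 unfolding h_def by simp
  have c: "\<bar>cos ((real_of_int i + 1) * h) - cos ((real_of_int i - real_of_int dd) * h)\<bar> \<le> (real_of_int dd + 1) * h"
    using cos_lip[of "(real_of_int i + 1) * h" "(real_of_int i - real_of_int dd) * h"] h0 d0
    by (simp add: algebra_simps)
  have "Gk k (i+1) - Gk k (i - dd) = (real_of_int dd + 1) * h
         - (cos ((real_of_int i + 1) * h) - cos ((real_of_int i - real_of_int dd) * h)) / 3"
    unfolding Gk_def h_def[symmetric] by (simp add: algebra_simps diff_divide_distrib)
  also have "\<dots> \<le> (real_of_int dd + 1) * h * (4/3)" by (rule aux43[OF c])
  also have "\<dots> \<le> (real k + 1) * h * (4/3)"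
    using d0 h0 by (intro mult_right_mono) auto
  also have "\<dots> \<le> 27/20" using assms unfolding h_def by (simp add: field_simps)
  finally show ?thesis unfolding dd_def .
qed

lemma pow_decay:
  assumes "k \<ge> 1"
  shows "(1 - 2 / (3 * real k))^k \<le> 3/5"
proof -
  define x where "x = 2 / (3 * real k)"
  have x0: "0 \<le> x" "x \<le> 1" using assms unfolding x_def by (auto simp: field_simps)
  have "1 + real k * x \<le> (1 + x)^k" using Bernoulli_inequality[of x k] x0 by simp
  moreover have "real k * x = 2/3" using assms unfolding x_def by simp
  ultimately have b: "5/3 \<le> (1 + x)^k" by simp
  have "(1 - x)^k * (1 + x)^k = (1 - x^2)^k" by (simp add: power_mult_distrib[symmetric] power2_eq_square algebra_simps)
  also have "\<dots> \<le> 1" using x0 by (intro power_le_one) (auto simp: power_le_one)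
  finally have "(1 - x)^k * (1 + x)^k \<le> 1" .
  moreover have "0 \<le> (1 - x)^k" using x0 by simp
  ultimately have "(1 - x)^k * (5/3) \<le> 1"
    using b by (smt (verit) mult_left_mono)
  then show ?thesis unfolding x_def by simp
qed

lemma conc_rho:
  assumes "k \<ge> 100"
  shows "max (4 / (3 * real k) + (27/20)^2/2) ((1 - 2 / (3 * real k))^k) \<le> 19/20"
proof -
  have "4 / (3 * real k) \<le> 1/75" using assms by (simp add: field_simps)
  then have "4 / (3 * real k) + (27/20)^2/2 \<le> 19/20" by (simp add: power2_eq_square)
  moreover have "(1 - 2 / (3 * real k))^k \<le> 19/20" using pow_decay[of k] assms by simp
  ultimately show ?thesis by (rule max.boundedI)
qed

lemma part1:
  assumes k: "k \<ge> 100"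
  shows "unif_asymp_stable k"
proof -
  have k1: "k \<ge> 1" using k by simp
  define C where "C = (1 + 4 / (3 * real k))^(5*k+1)"
  have C1: "1 \<le> C" unfolding C_def by (rule one_le_power) simp
  have main: "\<bar>z i\<bar> \<le> (19/20)^p * (C * \<delta>)"
    if "dsol k n0 z" "\<forall>j\<in>{n0 - int k..n0}. \<bar>z j\<bar> < \<delta>"
       "n0 - int k + int p * (5 * int k + 1) \<le> i" for z n0 \<delta> p i
  proof -
    have rec: "\<And>i. i \<ge> n0 \<Longrightarrow> z (i+1) = z i - dcoef (1 / real k) i * z (i - ddelay (1 / real k) i)"
      using that(1) unfolding dsol_def by blast
    have init: "\<And>i. n0 - int k \<le> i \<Longrightarrow> i \<le> n0 \<Longrightarrow> \<bar>z i\<bar> \<le> \<delta>"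
      using that(2) by force
    show ?thesis unfolding C_def
      by (rule decay_all[OF conc_aG conc_a(1)[OF k1] conc_a(2)[OF k1] _ _ conc_d(1)[OF k1] conc_d(2)[OF k1]
            conc_win _ k1 conc_rho[OF k] _ rec init that(3)])
         (use k in auto)
  qed
  have st: "unif_stable k"
    unfolding unif_stable_def
  proof (intro allI impI)
    fix \<epsilon> :: real assume e: "\<epsilon> > 0"
    show "\<exists>\<delta>>0. \<forall>n0\<ge>0. \<forall>z. dsol k n0 z \<and> (\<forall>j\<in>{n0 - int k..n0}. \<bar>z j\<bar> < \<delta>) \<longrightarrow> (\<forall>n\<ge>n0. \<bar>z n\<bar> < \<epsilon>)"
    proof (intro exI[of _ "\<epsilon> / (2 * C)"] conjI allI impI)
      show "\<epsilon> / (2 * C) > 0" using e C1 by simp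
      fix n0 :: int and z n
      assume h: "dsol k n0 z \<and> (\<forall>j\<in>{n0 - int k..n0}. \<bar>z j\<bar> < \<epsilon> / (2 * C))" and n: "n0 \<le> n"
      have "\<bar>z n\<bar> \<le> (19/20)^0 * (C * (\<epsilon> / (2 * C)))"
        by (rule main) (use h n in auto)
      also have "\<dots> < \<epsilon>" using e C1 by simp
      finally show "\<bar>z n\<bar> < \<epsilon>" .
    qed
  qed
  have at: "unif_attractive k"
    unfolding unif_attractive_def
  proof (intro exI[of _ "1::real"] conjI allI impI)
    show "(0::real) < 1" by simp
    fix \<epsilon> :: real assume e: "\<epsilon> > 0"
    obtain p where p: "(19/20::real)^p < \<epsilon> / C" using real_arch_pow_inv[of "\<epsilon> / C" "19/20"] e C1 by auto
    show "\<exists>N::nat. \<forall>n0\<ge>0. \<forall>z. dsol k n0 z \<and> (\<forall>j\<in>{n0 - int k..n0}. \<bar>z j\<bar> < 1) \<longrightarrow> (\<forall>n\<ge>n0 + int N. \<bar>z n\<bar> < \<epsilon>)"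
    proof (intro exI[of _ "p * (5 * k + 1)"] allI impI)
      fix n0 :: int and z n
      assume h: "dsol k n0 z \<and> (\<forall>j\<in>{n0 - int k..n0}. \<bar>z j\<bar> < 1)" and n: "n0 + int (p * (5 * k + 1)) \<le> n"
      have "\<bar>z n\<bar> \<le> (19/20)^p * (C * 1)"
        by (rule main) (use h n in \<open>auto simp: algebra_simps\<close>)
      also have "\<dots> < \<epsilon>" using p C1 by (simp add: field_simps)
      finally show "\<bar>z n\<bar> < \<epsilon>" .
    qed
  qed
  show ?thesis unfolding unif_asymp_stable_def using st at by simp
qed

lemma local_err:
  fixes x :: "real \<Rightarrow> real"
  assumes dx: "\<And>s. s \<ge> 0 \<Longrightarrow> (x has_real_derivative (- (1 + sin s / 3) * x (s - \<bar>cos s\<bar>))) (at s within {0..})"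
    and ab: "0 \<le> a" "a \<le> b"
    and bound: "\<And>s. a \<le> s \<Longrightarrow> s \<le> b \<Longrightarrow> \<bar>x (s - \<bar>cos s\<bar>) - c\<bar> \<le> \<omega>"
  shows "\<bar>x b - x a + c * ((b - cos b / 3) - (a - cos a / 3))\<bar> \<le> (4/3) * \<omega> * (b - a)"
proof -
  define f where "f = (\<lambda>s. x s + c * (s - cos s / 3))"
  define f' where "f' = (\<lambda>s. - (1 + sin s / 3) * x (s - \<bar>cos s\<bar>) + c * (1 + sin s / 3))"
  have df: "(f has_field_derivative f' s) (at s within {a..b})" if "s \<in> {a..b}" for s
  proof -
    have "(x has_real_derivative (- (1 + sin s / 3) * x (s - \<bar>cos s\<bar>))) (at s within {a..b})"
      by (rule DERIV_subset[OF dx]) (use that ab in auto)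
    moreover have "((\<lambda>s. s - cos s / 3) has_real_derivative (1 + sin s / 3)) (at s within {a..b})"
      by (auto intro!: derivative_eq_intros)
    ultimately show ?thesis unfolding f_def f'_def
      by (auto intro!: derivative_eq_intros)
  qed
  have nb: "norm (f' s) \<le> (4/3) * \<omega>" if "s \<in> {a..b}" for s
  proof -
    have "f' s = (1 + sin s / 3) * (c - x (s - \<bar>cos s\<bar>))" unfolding f'_def by (simp add: algebra_simps)
    then have "norm (f' s) = \<bar>1 + sin s / 3\<bar> * \<bar>x (s - \<bar>cos s\<bar>) - c\<bar>" by (simp add: abs_mult abs_minus_commute)
    also have "\<dots> \<le> (4/3) * \<omega>"
    proof (rule mult_mono)
      have "-1 \<le> sin s" "sin s \<le> 1" by simp_all
      then show "\<bar>1 + sin s / 3\<bar> \<le> 4/3" unfolding abs_le_iff by linarith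
      show "\<bar>x (s - \<bar>cos s\<bar>) - c\<bar> \<le> \<omega>" using bound that by auto
    qed auto
    finally show ?thesis .
  qed
  have "norm (f b - f a) \<le> (4/3) * \<omega> * norm (b - a)"
    by (rule field_differentiable_bound[OF convex_real_interval(5) df nb]) (use ab in auto)
  then show ?thesis using ab unfolding f_def by (simp add: algebra_simps)
qed

lemma delay_facts:
  fixes h :: real and n :: int
  assumes h0: "h > 0"
  shows "real_of_int (ddelay h n) * h \<le> \<bar>cos (real_of_int n * h)\<bar>"
        "\<bar>cos (real_of_int n * h)\<bar> - h < real_of_int (ddelay h n) * h"
proof -
  define c where "c = \<bar>cos (real_of_int n * h)\<bar>"
  have "real_of_int \<lfloor>c / h\<rfloor> \<le> c / h" by (rule of_int_floor_le)
  then have "real_of_int \<lfloor>c / h\<rfloor> * h \<le> c / h * h" using h0 by (intro mult_right_mono) auto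
  then show "real_of_int (ddelay h n) * h \<le> \<bar>cos (real_of_int n * h)\<bar>"
    unfolding ddelay_def c_def[symmetric] using h0 by simp
  have "c / h < real_of_int \<lfloor>c / h\<rfloor> + 1" by (rule real_of_int_floor_add_one_gt)
  then have "c / h * h < (real_of_int \<lfloor>c / h\<rfloor> + 1) * h" using h0 by (intro mult_strict_right_mono) auto
  then show "\<bar>cos (real_of_int n * h)\<bar> - h < real_of_int (ddelay h n) * h"
    unfolding ddelay_def c_def[symmetric] using h0 by (simp add: algebra_simps)
qed

lemma err_bound:
  fixes x \<phi> :: "real \<Rightarrow> real" and zz :: "int \<Rightarrow> real" and k :: nat
  assumes dde: "dde_sol \<phi> x"
    and k1: "k \<ge> 1"
    and sol: "dsol k 0 zz" and init: "\<forall>j\<in>{- int k..0}. zz j = \<phi> (real_of_int j / real k)"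
    and uc: "\<And>u v. u \<in> {-1..t+1} \<Longrightarrow> v \<in> {-1..t+1} \<Longrightarrow> \<bar>u - v\<bar> < \<delta>0 \<Longrightarrow> \<bar>x u - x v\<bar> < \<eta>"
    and hk: "2 / real k < \<delta>0" and t0: "0 \<le> t"
  shows "real p * (1 / real k) \<le> t \<Longrightarrow> - int k \<le> i \<Longrightarrow> i \<le> int p \<Longrightarrow>
     \<bar>x (real_of_int i * (1 / real k)) - zz i\<bar> \<le> real p * ((4/3) * \<eta> * (1 / real k)) * (1 + 2 * (1 / real k))^p"
proof (induction p arbitrary: i)
  define h where "h = 1 / real k"
  have h0: "h > 0" using k1 unfolding h_def by simp
  case 0
  then have i1: "-1 \<le> real_of_int i * h" "real_of_int i * h \<le> 0"
    using k1 unfolding h_def by (auto simp: field_simps)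
  have "x (real_of_int i * h) = \<phi> (real_of_int i * h)" using dde i1 unfolding dde_sol_def by auto
  moreover have "zz i = \<phi> (real_of_int i * h)" using init 0 unfolding h_def by auto
  ultimately show ?case unfolding h_def by simp
next
  define h where "h = 1 / real k"
  have h0: "h > 0" using k1 unfolding h_def by simp
  have eta0: "0 \<le> \<eta>" using uc[of 0 0] t0 hk k1 by (force simp: less_le_trans[of 0 "2 / real k"])
  case (Suc p)
  define E where "E = (\<lambda>p. real p * ((4/3) * \<eta> * h) * (1 + 2 * h)^p)"
  have IH: "\<And>i. - int k \<le> i \<Longrightarrow> i \<le> int p \<Longrightarrow> \<bar>x (real_of_int i * h) - zz i\<bar> \<le> E p"
  proof -
    fix i assume "- int k \<le> i" "i \<le> int p"
    have "real p * (1/real k) \<le> real (Suc p) * (1/real k)" using k1 by (intro mult_right_mono) auto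
    then have pt: "real p * (1 / real k) \<le> t" using Suc.prems(1) by linarith
    show "\<bar>x (real_of_int i * h) - zz i\<bar> \<le> E p"
      using Suc.IH[OF pt \<open>- int k \<le> i\<close> \<open>i \<le> int p\<close>] unfolding E_def h_def .
  qed
  have Emono: "E p \<le> E (Suc p)" unfolding E_def using h0 eta0
    by (intro mult_mono power_increasing) auto
  show ?case
  proof (cases "i \<le> int p")
    case True
    then show ?thesis using IH[of i] Suc.prems Emono unfolding E_def h_def by simp
  next
    case False
    then have ii: "i = int p + 1" using Suc.prems by simp
    define n where "n = int p"
    define d where "d = ddelay h n"
    define c where "c = x (real_of_int (n - d) * h)"
    define A where "A = dcoef h n"
    have dd: "0 \<le> d" "d \<le> int k" using conc_d[OF k1] unfolding d_def h_def by auto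
    have df: "real_of_int d * h \<le> \<bar>cos (real_of_int n * h)\<bar>" "\<bar>cos (real_of_int n * h)\<bar> - h < real_of_int d * h"
      using delay_facts[OF h0, of n] unfolding d_def by auto
    have tb: "real_of_int (n+1) * h \<le> t" using Suc.prems(1) unfolding n_def h_def by (simp add: add.commute)
    have n0: "0 \<le> real_of_int n * h" using h0 unfolding n_def by simp
    have bound: "\<bar>x (s - \<bar>cos s\<bar>) - c\<bar> \<le> \<eta>"
      if "real_of_int n * h \<le> s" "s \<le> real_of_int (n+1) * h" for s
    proof -
      have cs: "\<bar>\<bar>cos s\<bar> - \<bar>cos (real_of_int n * h)\<bar>\<bar> \<le> h"
        using cos_lip[of s "real_of_int n * h"] that by (simp add: algebra_simps)
      have u1: "-1 \<le> s - \<bar>cos s\<bar>" using that n0 abs_cos_le_one[of s] by linarith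
      have u2: "s - \<bar>cos s\<bar> \<le> t + 1" using that tb by simp
      have "real_of_int (n - d) * h = real_of_int n * h - real_of_int d * h" by (simp add: algebra_simps)
      then have v1: "-1 \<le> real_of_int (n - d) * h" using df n0 abs_cos_le_one[of "real_of_int n * h"]
        by linarith
      have "0 \<le> real_of_int d * h" using dd h0 by simp
      moreover have "real_of_int (n+1) * h = real_of_int n * h + h" by (simp add: algebra_simps)
      ultimately have v2: "real_of_int (n - d) * h \<le> t + 1" using tb h0 \<open>real_of_int (n - d) * h = real_of_int n * h - real_of_int d * h\<close> by linarith
      have "\<bar>(s - \<bar>cos s\<bar>) - real_of_int (n - d) * h\<bar> \<le> 2 * h"
        using cs df that by (simp add: algebra_simps abs_le_iff) linarith
      also have "\<dots> < \<delta>0" using hk unfolding h_def by simp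
      finally show ?thesis unfolding c_def using uc u1 u2 v1 v2 by force
    qed
    have R: "\<bar>x (real_of_int (n+1) * h) - x (real_of_int n * h) + c * A\<bar> \<le> (4/3) * \<eta> * h"
    proof -
      have "\<bar>x (real_of_int (n+1) * h) - x (real_of_int n * h)
          + c * ((real_of_int (n+1) * h - cos (real_of_int (n+1) * h) / 3) - (real_of_int n * h - cos (real_of_int n * h) / 3))\<bar>
          \<le> (4/3) * \<eta> * (real_of_int (n+1) * h - real_of_int n * h)"
        by (rule local_err[OF _ n0]) (use dde bound h0 in \<open>auto simp: dde_sol_def algebra_simps\<close>)
      then show ?thesis unfolding A_def dcoef_G[of h n, symmetric] by (simp add: algebra_simps)
    qed
    have rec: "zz (n+1) = zz n - A * zz (n - d)"
      using sol unfolding dsol_def A_def d_def h_def n_def by simp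
    have e1: "\<bar>x (real_of_int n * h) - zz n\<bar> \<le> E p" using IH[of n] k1 unfolding n_def by simp
    have e2: "\<bar>c - zz (n - d)\<bar> \<le> E p" using IH[of "n - d"] dd unfolding c_def n_def by simp
    have A1: "2/(3*real k) \<le> A" "A \<le> 4/(3*real k)" using conc_a[OF k1] unfolding A_def h_def by auto
    have "0 \<le> 2/(3*real k)" by simp
    moreover have "4/(3*real k) \<le> 2 * h" unfolding h_def using k1 by (simp add: field_simps)
    ultimately have A0: "0 \<le> A" "A \<le> 2 * h" using A1 by linarith+
    have "x (real_of_int (n+1) * h) - zz (n+1) =
        (x (real_of_int (n+1) * h) - x (real_of_int n * h) + c * A) + (x (real_of_int n * h) - zz n) - A * (c - zz (n - d))"
      using rec by (simp add: algebra_simps)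
    moreover have "\<bar>(x (real_of_int (n+1) * h) - x (real_of_int n * h) + c * A) + (x (real_of_int n * h) - zz n) - A * (c - zz (n - d))\<bar>
       \<le> \<bar>(x (real_of_int (n+1) * h) - x (real_of_int n * h) + c * A) + (x (real_of_int n * h) - zz n)\<bar> + \<bar>A * (c - zz (n - d))\<bar>"
      by (rule abs_triangle_ineq4)
    moreover have "\<bar>(x (real_of_int (n+1) * h) - x (real_of_int n * h) + c * A) + (x (real_of_int n * h) - zz n)\<bar>
       \<le> \<bar>x (real_of_int (n+1) * h) - x (real_of_int n * h) + c * A\<bar> + \<bar>x (real_of_int n * h) - zz n\<bar>"
      by (rule abs_triangle_ineq)
    moreover have "\<bar>A * (c - zz (n - d))\<bar> = A * \<bar>c - zz (n - d)\<bar>" using A0(1) by (simp add: abs_mult)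
    moreover have "A * \<bar>c - zz (n - d)\<bar> \<le> A * E p" using mult_left_mono[OF e2 A0(1)] .
    ultimately have "\<bar>x (real_of_int (n+1) * h) - zz (n+1)\<bar> \<le> (4/3) * \<eta> * h + E p + A * E p"
      using R e1 by linarith
    also have "\<dots> \<le> (4/3) * \<eta> * h + E p * (1 + 2 * h)"
    proof -
      have Ep0: "0 \<le> E p" using e1 by linarith
      have "A * E p \<le> 2 * h * E p" using mult_right_mono[OF A0(2) Ep0] .
      then show ?thesis by (simp add: algebra_simps)
    qed
    also have "\<dots> \<le> E (Suc p)"
    proof -
      have "1 \<le> (1 + 2 * h)^Suc p" using h0 by (intro one_le_power) simp
      then have "(4/3) * \<eta> * h * 1 \<le> (4/3) * \<eta> * h * (1 + 2 * h)^Suc p" using eta0 h0 by (intro mult_left_mono) auto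
      moreover have "E p * (1 + 2*h) = real p * ((4/3)*\<eta>*h) * (1+2*h)^Suc p" unfolding E_def by simp
      moreover have "E (Suc p) = real p * ((4/3)*\<eta>*h) * (1+2*h)^Suc p + (4/3)*\<eta>*h*(1+2*h)^Suc p"
        unfolding E_def by (simp add: algebra_simps add_divide_distrib)
      ultimately show ?thesis by linarith
    qed
    finally show ?thesis unfolding ii E_def n_def h_def by (simp add: add.commute)
  qed
qed

lemma part2:
  fixes \<phi> x :: "real \<Rightarrow> real" and \<zeta> :: "nat \<Rightarrow> int \<Rightarrow> real"
  assumes dde: "dde_sol \<phi> x"
    and hz: "\<forall>k\<ge>1. dsol k 0 (\<zeta> k) \<and> (\<forall>j\<in>{- int k..0}. \<zeta> k j = \<phi> (real_of_int j / real k))"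
    and t0: "t > 0"
  shows "(\<lambda>k. \<bar>x t - \<zeta> k \<lfloor>t / (1 / real k)\<rfloor>\<bar>) \<longlonglongrightarrow> 0"
proof (rule LIMSEQ_I)
  fix \<epsilon> :: real assume e: "0 < \<epsilon>"
  define c0 where "c0 = (4/3) * t * exp (2*t)"
  have c00: "0 \<le> c0" using t0 unfolding c0_def by simp
  define \<eta> where "\<eta> = \<epsilon> / (2 * (c0 + 1))"
  have eta0: "0 < \<eta>" using e c00 unfolding \<eta>_def by simp
  have cont: "continuous_on {-1..t+1} x"
    using dde unfolding dde_sol_def by (auto intro: continuous_on_subset)
  have "uniformly_continuous_on {-1..t+1} x"
    by (rule compact_uniformly_continuous[OF cont compact_Icc])
  then obtain \<delta>0 where d0: "\<delta>0 > 0"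
    and dprop: "\<forall>u\<in>{-1..t+1}. \<forall>v\<in>{-1..t+1}. dist v u < \<delta>0 \<longrightarrow> dist (x v) (x u) < \<eta>"
    using eta0 unfolding uniformly_continuous_on_def by metis
  have uc: "\<And>u v. u \<in> {-1..t+1} \<Longrightarrow> v \<in> {-1..t+1} \<Longrightarrow> \<bar>u - v\<bar> < \<delta>0 \<Longrightarrow> \<bar>x u - x v\<bar> < \<eta>"
    using dprop by (auto simp: dist_real_def)
  define N where "N = nat \<lceil>3 / \<delta>0\<rceil> + 1"
  show "\<exists>no. \<forall>k\<ge>no. norm (\<bar>x t - \<zeta> k \<lfloor>t / (1 / real k)\<rfloor>\<bar> - 0) < \<epsilon>"
  proof (intro exI[of _ N] allI impI)
    fix k assume kN: "N \<le> k"
    have k1: "k \<ge> 1" using kN unfolding N_def by simp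
    have "3 / \<delta>0 < real k" using kN unfolding N_def by linarith
    then have "3 < real k * \<delta>0" using d0 by (simp add: field_simps)
    then have hk3: "3 / real k < \<delta>0" using k1 by (simp add: field_simps)
    have hk: "2 / real k < \<delta>0" using hk3 k1 by (smt (verit) divide_right_mono of_nat_0_le_iff)
    define p where "p = nat \<lfloor>t * real k\<rfloor>"
    have tk0: "0 \<le> t * real k" using t0 by simp
    have fl: "\<lfloor>t / (1 / real k)\<rfloor> = int p" unfolding p_def using tk0 by simp
    have p1: "real p \<le> t * real k" unfolding p_def using tk0 by linarith
    have p2: "t * real k < real p + 1" unfolding p_def using tk0 by linarith
    have pt: "real p * (1 / real k) \<le> t" using p1 k1 by (simp add: field_simps)
    have sol: "dsol k 0 (\<zeta> k)" and init: "\<forall>j\<in>{- int k..0}. \<zeta> k j = \<phi> (real_of_int j / real k)"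
      using hz k1 by auto
    have eb: "\<bar>x (real_of_int (int p) * (1 / real k)) - \<zeta> k (int p)\<bar>
        \<le> real p * ((4/3) * \<eta> * (1 / real k)) * (1 + 2 * (1 / real k))^p"
      by (rule err_bound[OF dde k1 sol init uc hk _ pt]) (use t0 k1 in auto)
    have pw: "(1 + 2 * (1 / real k))^p \<le> exp (2 * t)"
    proof -
      have "(1 + 2 * (1 / real k))^p \<le> exp (2 * (1 / real k))^p"
        by (intro power_mono) (use k1 in auto)
      also have "\<dots> = exp (real p * (2 * (1 / real k)))" by (rule exp_of_nat_mult[symmetric])
      also have "\<dots> \<le> exp (2 * t)"
      proof -
        have "real p * (2 * (1 / real k)) = 2 * (real p * (1 / real k))" by simp
        also have "\<dots> \<le> 2 * t" using pt by simp
        finally show ?thesis by simp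
      qed
      finally show ?thesis .
    qed
    have "real p * ((4/3) * \<eta> * (1 / real k)) = (4/3) * \<eta> * (real p * (1 / real k))" by simp
    also have "\<dots> \<le> (4/3) * \<eta> * t" using pt eta0 by (intro mult_left_mono) auto
    finally have X: "real p * ((4/3) * \<eta> * (1 / real k)) \<le> (4/3) * \<eta> * t" .
    have "real p * ((4/3) * \<eta> * (1 / real k)) * (1 + 2 * (1 / real k))^p \<le> (4/3) * \<eta> * t * exp (2 * t)"
      by (rule mult_mono[OF X pw]) (use eta0 t0 in auto)
    also have "(4/3) * \<eta> * t * exp (2 * t) = c0 * \<eta>" unfolding c0_def by simp
    finally have Y: "real p * ((4/3) * \<eta> * (1 / real k)) * (1 + 2 * (1 / real k))^p \<le> c0 * \<eta>" .
    have eb': "\<bar>x (real p * (1 / real k)) - \<zeta> k (int p)\<bar>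
        \<le> real p * ((4/3) * \<eta> * (1 / real k)) * (1 + 2 * (1 / real k))^p"
      using eb by (simp only: of_int_of_nat_eq)
    have E: "\<bar>x (real p * (1 / real k)) - \<zeta> k (int p)\<bar> \<le> c0 * \<eta>"
      using order_trans[OF eb' Y] .
    have close: "\<bar>x t - x (real p * (1 / real k))\<bar> < \<eta>"
    proof (rule uc)
      show "t \<in> {-1..t+1}" using t0 by simp
      have "0 \<le> real p * (1 / real k)" by simp
      then show "real p * (1 / real k) \<in> {-1..t+1}" using pt unfolding atLeastAtMost_iff by linarith
      have "(t * real k - real p) / real k < 1 / real k" using p2 k1 by (intro divide_strict_right_mono) auto
      moreover have "t - real p * (1 / real k) = (t * real k - real p) / real k" using k1 by (simp add: field_simps)
      ultimately have "t - real p * (1 / real k) < 1 / real k" by simp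
      moreover have "1 / real k < \<delta>0" using hk3 k1 by (smt (verit) divide_right_mono of_nat_0_le_iff)
      ultimately show "\<bar>t - real p * (1 / real k)\<bar> < \<delta>0" using pt by simp
    qed
    have "\<bar>x t - \<zeta> k (int p)\<bar> \<le> \<bar>x t - x (real p * (1 / real k))\<bar> + \<bar>x (real p * (1 / real k)) - \<zeta> k (int p)\<bar>"
      using abs_triangle_ineq[of "x t - x (real p * (1 / real k))" "x (real p * (1 / real k)) - \<zeta> k (int p)"] by simp
    also have "\<dots> < \<eta> + c0 * \<eta>" using close E by linarith
    also have "\<dots> = (c0 + 1) * \<eta>" by (simp add: algebra_simps)
    also have "\<dots> = \<epsilon> / 2" unfolding \<eta>_def using c00 by (simp add: field_simps)
    also have "\<dots> < \<epsilon>" using e by simp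
    finally show "norm (\<bar>x t - \<zeta> k \<lfloor>t / (1 / real k)\<rfloor>\<bar> - 0) < \<epsilon>" unfolding fl by simp
  qed
qed

theorem mainTheorem6:
  shows "(\<exists>K::nat. \<forall>k\<ge>K. k \<ge> 1 \<longrightarrow> unif_asymp_stable k) \<and>
    (\<forall>(\<phi>::real \<Rightarrow> real) x (\<zeta>::nat \<Rightarrow> int \<Rightarrow> real).
       continuous_on {-1..0} \<phi> \<longrightarrow> dde_sol \<phi> x \<longrightarrow>
       (\<forall>k\<ge>1. dsol k 0 (\<zeta> k) \<and> (\<forall>j\<in>{- int k..0}. \<zeta> k j = \<phi> (real_of_int j / real k))) \<longrightarrow>
       (\<forall>t>0. (\<lambda>k. \<bar>x t - \<zeta> k \<lfloor>t / (1 / real k)\<rfloor>\<bar>) \<longlonglongrightarrow> 0))"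
  using part1 part2 by blast

end
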